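(* Let $\boldsymbol{\xi}_n \sim \mathrm{GP}(m_n,k_n)$ be a Gaussian process on a set $\mathcal{X}$ (the posterior after $n$ noisy observations), let $\tau^2\geq 0$ be the observation noise variance, and fix $\boldsymbol{x},\boldsymbol{x}'\in\mathcal{X}$ with $k_n(\boldsymbol{x},\boldsymbol{x})+\tau^2>0$. Suppose the next observation is made at $\boldsymbol{x}_{n+1}=\boldsymbol{x}$, with value $Z_{n+1} = m_n(\boldsymbol{x}) + \sqrt{k_n(\boldsymbol{x},\boldsymbol{x})+\tau^2}\,V$, $V\sim\mathcal{N}(0,1)$, and let $\boldsymbol{\xi}_{n+1}\sim\mathrm{GP}(m_{n+1},k_{n+1})$ be the GP updated by this observation, so that $\xi_{n+1}(\boldsymbol{x}')\sim\mathcal{N}(m_{n+1}(\boldsymbol{x}'),k_{n+1}(\boldsymbol{x}',\boldsymbol{x}'))$ with $$m_{n+1}(\boldsymbol{x}') = m_n(\boldsymbol{x}') + \alpha_n V,\quad \alpha_n = \frac{k_n(\boldsymbol{x},\boldsymbol{x}')}{\sqrt{k_n(\boldsymbol{x},\boldsymbol{x})+\tau^2}},\quad \sigma_{n+1}^2 := k_{n+1}(\boldsymbol{x}',\boldsymbol{x}') = k_n(\boldsymbol{x}',\boldsymbol{x}') - \frac{k_n(\boldsymbol{x},\boldsymbol{x}')^2}{k_n(\boldsymbol{x},\boldsymbol{x})+\tau^2},$$ and assume $\sigma_{n+1}>0$. Write $\mu_n = m_n(\boldsymbol{x}')$ and let $\mathbb{E}_{n,\boldsymbol{x}}$ denote expectation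 over $V$. Let $t\in\mathbb{R}$. (i) For $\mathrm{d}\gamma_1(u)=\mathbb{1}\{t\leq u\}\,\mathrm{d}\lambda(u)$, $$\mathbb{E}_{n,\boldsymbol{x}}\left[\mathrm{CRPS}_{\gamma_1}(\xi_{n+1}(\boldsymbol{x}'))\right] = \sigma_{n+1}\,\mathbb{E}\left[\left(N - \max\left(\tilde N, \frac{t-\mu_n-\alpha_n V}{\sigma_{n+1}}\right)\right)_+\right],$$ with $N,\tilde N, V$ i.i.d. $\mathcal{N}(0,1)$. (ii) For $\sigma_\gamma>0$ and $\mathrm{d}\gamma_2(u)=\frac{1}{\sigma_\gamma}\phi\!\left(\frac{u-t}{\sigma_\gamma}\right)\mathrm{d}\lambda(u)$, $$\mathbb{E}_{n,\boldsymbol{x}}\left[\mathrm{CRPS}_{\gamma_2}(\xi_{n+1}(\boldsymbol{x}'))\right] = \Phi\!\left(\begin{pmatrix}0\\0\end{pmatrix}; \begin{pmatrix}\mu_n-t\\ t-\mu_n\end{pmatrix}, \begin{pmatrix}\sigma_{n+1}^2+\alpha_n^2+\sigma_\gamma^2 & -\alpha_n^2-\sigma_\gamma^2\\ -\alpha_n^2-\sigma_\gamma^2 & \sigma_{n+1}^2+\alpha_n^2+\sigma_\gamma^2\end{pmatrix}\right).$$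
   Context: $\lambda$ is Lebesgue measure on $\mathbb{R}$; $\phi$, $\Phi$ are the standard normal density and CDF; $\Phi(\cdot;\boldsymbol{\mu},\boldsymbol{\Sigma})$ is the bivariate Gaussian CDF with mean $\boldsymbol{\mu}$ and covariance $\boldsymbol{\Sigma}$; $(a)_+=\max(a,0)$. For a CDF $F$, a Borel measure $\gamma$ and $y\in\mathbb{R}$, $\mathrm{CRPS}_\gamma(F,y) = \int[F(u)-\mathbb{1}\{y\leq u\}]^2\,\mathrm{d}\gamma(u)$, and the expected threshold-weighted CRPS is $\mathrm{CRPS}_\gamma(F) = \int \mathrm{CRPS}_\gamma(F,y')\,\mathrm{d}F(y')$; for a Gaussian random variable, $\mathrm{CRPS}_\gamma$ of it means $\mathrm{CRPS}_\gamma$ of its CDF. Here $\mathrm{CRPS}_\gamma(\xi_{n+1}(\boldsymbol{x}'))$ is computed for the Gaussian $\mathcal{N}(m_{n+1}(\boldsymbol{x}'),\sigma_{n+1}^2)$ given $V$, and then averaged over $V$. *)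

theory Defs
  imports "HOL-Probability.Probability"
begin

definition gauss :: "real \<Rightarrow> real \<Rightarrow> real measure" where
  "gauss mu s = density lborel (normal_density mu s)"

definition CRPS :: "real measure \<Rightarrow> (real \<Rightarrow> real) \<Rightarrow> real \<Rightarrow> ennreal" where
  "CRPS \<gamma> F y = (\<integral>\<^sup>+ u. ennreal ((F u - indicator {y..} u)\<^sup>2) \<partial>\<gamma>)"

definition expected_CRPS :: "real measure \<Rightarrow> real measure \<Rightarrow> ennreal" where
  "expected_CRPS \<gamma> M = (\<integral>\<^sup>+ y'. CRPS \<gamma> (cdf M) y' \<partial>M)"

definition bivariate_normal_density ::
  "real \<Rightarrow> real \<Rightarrow> real \<Rightarrow> real \<Rightarrow> real \<Rightarrow> real \<times> real \<Rightarrow> real" where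
  "bivariate_normal_density m1 m2 s11 s12 s22 p =
     (let D = s11 * s22 - s12\<^sup>2; a = fst p - m1; b = snd p - m2 in
      exp (- (s22 * a\<^sup>2 - 2 * s12 * a * b + s11 * b\<^sup>2) / (2 * D)) / (2 * pi * sqrt D))"

definition bivariate_Phi ::
  "real \<times> real \<Rightarrow> real \<Rightarrow> real \<Rightarrow> real \<Rightarrow> real \<Rightarrow> real \<Rightarrow> real" where
  "bivariate_Phi z m1 m2 s11 s12 s22 =
     measure (density (lborel \<Otimes>\<^sub>M lborel) (bivariate_normal_density m1 m2 s11 s12 s22))
       ({..fst z} \<times> {..snd z})"

end

theory Submission imports Defs begin

lemma gauss_neg: "gauss m (-s) = gauss m s"
  by (simp add: gauss_def normal_density_def)

lemma prob_gauss: "s \<noteq> 0 \<Longrightarrow> prob_space (gauss m s)"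
  using prob_space_normal_density[of "\<bar>s\<bar>" m] unfolding gauss_def
  by (cases "s > 0") (auto simp: normal_density_def)

lemma sets_gauss[simp, measurable_cong]: "sets (gauss m s) = sets borel"
  by (simp add: gauss_def)

lemma space_gauss[simp]: "space (gauss m s) = UNIV"
  by (simp add: gauss_def)

lemma nd_affine: "s \<noteq> 0 \<Longrightarrow> \<bar>s\<bar> * normal_density m s (m + s*x) = normal_density 0 1 x"
  by (simp add: normal_density_def real_sqrt_mult field_simps power2_eq_square real_sqrt_abs2)

lemma gauss_affine:
  assumes s: "s \<noteq> 0" and f[measurable]: "f \<in> borel_measurable borel"
  shows "(\<integral>\<^sup>+y. f y \<partial>gauss m s) = (\<integral>\<^sup>+x. f (m + s*x) \<partial>gauss 0 1)"
proof -
  have "(\<integral>\<^sup>+y. f y \<partial>gauss m s) = (\<integral>\<^sup>+y. ennreal (normal_density m s y) * f y \<partial>lborel)"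
    unfolding gauss_def by (subst nn_integral_density) auto
  also have "\<dots> = ennreal \<bar>s\<bar> * (\<integral>\<^sup>+x. ennreal (normal_density m s (m + s*x)) * f (m + s*x) \<partial>lborel)"
    by (rule nn_integral_real_affine) (use s in auto)
  also have "\<dots> = (\<integral>\<^sup>+x. ennreal \<bar>s\<bar> * (ennreal (normal_density m s (m + s*x)) * f (m + s*x)) \<partial>lborel)"
    by (subst nn_integral_cmult) auto
  also have "\<dots> = (\<integral>\<^sup>+x. ennreal (normal_density 0 1 x) * f (m + s*x) \<partial>lborel)"
    by (intro nn_integral_cong) (simp add: mult.assoc[symmetric] ennreal_mult'[symmetric] nd_affine[OF s])
  also have "\<dots> = (\<integral>\<^sup>+x. f (m + s*x) \<partial>gauss 0 1)"
    unfolding gauss_def by (subst nn_integral_density) auto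
  finally show ?thesis .
qed

lemma gauss_affine_emeasure:
  assumes s: "s \<noteq> 0" and A[measurable]: "A \<in> sets borel"
  shows "emeasure (gauss m s) A = emeasure (gauss 0 1) {x. m + s*x \<in> A}"
proof -
  have "emeasure (gauss m s) A = (\<integral>\<^sup>+y. indicator A y \<partial>gauss m s)"
    by (subst nn_integral_indicator) auto
  also have "\<dots> = (\<integral>\<^sup>+x. indicator A (m + s*x) \<partial>gauss 0 1)"
    by (rule gauss_affine[OF s]) auto
  also have "\<dots> = (\<integral>\<^sup>+x. indicator {x. m + s*x \<in> A} x \<partial>gauss 0 1)"
    by (intro nn_integral_cong) (auto simp: indicator_def)
  also have "\<dots> = emeasure (gauss 0 1) {x. m + s*x \<in> A}"
    by (subst nn_integral_indicator) auto
  finally show ?thesis .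
qed

lemma rd_gauss: "s \<noteq> 0 \<Longrightarrow> real_distribution (gauss m s)"
  unfolding real_distribution_def real_distribution_axioms_def using prob_gauss by auto

lemma cdf_gauss_measurable[measurable]: "s \<noteq> 0 \<Longrightarrow> cdf (gauss m s) \<in> borel_measurable borel"
  by (rule borel_measurable_mono) (auto simp: mono_def intro: finite_borel_measure.cdf_nondecreasing
       real_distribution.finite_borel_measure_M rd_gauss)

lemma crps_inner:
  assumes s: "s \<noteq> 0"
  shows "(\<integral>\<^sup>+y'. ennreal ((cdf (gauss m s) u - indicator {y'..} u)\<^sup>2) \<partial>gauss m s)
     = emeasure (gauss m s) {..u} * emeasure (gauss m s) {u<..}"
proof -
  interpret P: prob_space "gauss m s" using prob_gauss[OF s] .
  define F where "F = cdf (gauss m s) u"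
  have F: "F = measure (gauss m s) {..u}" unfolding F_def cdf_def ..
  have F01: "0 \<le> F" "F \<le> 1" unfolding F by auto
  have E1: "emeasure (gauss m s) {..u} = ennreal F" unfolding F by (simp add: P.emeasure_eq_measure)
  have E2: "emeasure (gauss m s) {u<..} = ennreal (1 - F)"
  proof -
    have "{u<..} = space (gauss m s) - {..u}" by auto
    then show ?thesis unfolding F using P.prob_compl[of "{..u}"] by (simp add: P.emeasure_eq_measure)
  qed
  have "(\<integral>\<^sup>+y'. ennreal ((F - indicator {y'..} u)\<^sup>2) \<partial>gauss m s)
      = (\<integral>\<^sup>+y'. ennreal ((1 - F)\<^sup>2) * indicator {..u} y' + ennreal (F\<^sup>2) * indicator {u<..} y' \<partial>gauss m s)"
    by (intro nn_integral_cong) (auto simp: indicator_def power2_commute)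
  also have "\<dots> = ennreal ((1 - F)\<^sup>2) * emeasure (gauss m s) {..u} + ennreal (F\<^sup>2) * emeasure (gauss m s) {u<..}"
    by (subst nn_integral_add) (auto simp: nn_integral_cmult_indicator)
  also have "\<dots> = ennreal ((1 - F)\<^sup>2 * F + F\<^sup>2 * (1 - F))"
    using F01 by (simp add: E1 E2 ennreal_mult'[symmetric] ennreal_plus[symmetric] del: ennreal_plus)
  also have "\<dots> = ennreal F * ennreal (1 - F)"
    using F01 by (simp add: ennreal_mult'[symmetric] power2_eq_square algebra_simps)
  finally show ?thesis unfolding F_def E1 E2 .
qed

lemma ind_meas[measurable]:
  fixes F :: "real \<Rightarrow> real"
  assumes [measurable]: "F \<in> borel_measurable borel"
  shows "(\<lambda>p. ennreal ((F (snd p) - indicator {fst p..} (snd p))\<^sup>2)) \<in> borel_measurable (borel \<Otimes>\<^sub>M borel)"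
proof -
  have "(\<lambda>p. ennreal ((F (snd p) - indicator {fst p..} (snd p))\<^sup>2)) = (\<lambda>p::real\<times>real. ennreal ((F (snd p) - (if fst p \<le> snd p then 1 else 0))\<^sup>2))"
    by (auto simp: indicator_def fun_eq_iff)
  also have "\<dots> \<in> borel_measurable (borel \<Otimes>\<^sub>M borel)" by measurable
  finally show ?thesis .
qed

lemma gauss_density:
  "f \<in> borel_measurable borel \<Longrightarrow> (\<integral>\<^sup>+y. f y \<partial>gauss m s) = (\<integral>\<^sup>+y. ennreal (normal_density m s y) * f y \<partial>lborel)"
  unfolding gauss_def by (subst nn_integral_density) auto

lemma expected_CRPS_gauss:
  assumes s: "s \<noteq> 0" and g[measurable]: "g \<in> borel_measurable borel"
  shows "expected_CRPS (density lborel g) (gauss m s)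
     = (\<integral>\<^sup>+u. g u * (emeasure (gauss m s) {..u} * emeasure (gauss m s) {u<..}) \<partial>lborel)"
proof -
  define F where "F = cdf (gauss m s)"
  have [measurable]: "F \<in> borel_measurable borel" unfolding F_def using s by measurable
  have "expected_CRPS (density lborel g) (gauss m s)
      = (\<integral>\<^sup>+y'. (\<integral>\<^sup>+u. g u * ennreal ((F u - (if y' \<le> u then 1 else 0))\<^sup>2) \<partial>lborel) \<partial>gauss m s)"
  proof -
    have eq: "\<And>y' u. indicator {y'..} u = (if y' \<le> u then 1 else (0::real))" by (simp add: indicator_def)
    show ?thesis
      unfolding expected_CRPS_def CRPS_def F_def[symmetric] eq
      by (intro nn_integral_cong, subst nn_integral_density) measurable
  qed
  also have "\<dots> = (\<integral>\<^sup>+y'. ennreal (normal_density m s y') * (\<integral>\<^sup>+u. g u * ennreal ((F u - (if y' \<le> u then 1 else 0))\<^sup>2) \<partial>lborel) \<partial>lborel)"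
    by (subst gauss_density) auto
  also have "\<dots> = (\<integral>\<^sup>+y'. (\<integral>\<^sup>+u. ennreal (normal_density m s y') * (g u * ennreal ((F u - (if y' \<le> u then 1 else 0))\<^sup>2)) \<partial>lborel) \<partial>lborel)"
    by (intro nn_integral_cong, subst nn_integral_cmult) auto
  also have "\<dots> = (\<integral>\<^sup>+u. (\<integral>\<^sup>+y'. ennreal (normal_density m s y') * (g u * ennreal ((F u - (if y' \<le> u then 1 else 0))\<^sup>2)) \<partial>lborel) \<partial>lborel)"
    by (rule lborel_pair.Fubini'[symmetric]) measurable
  also have "\<dots> = (\<integral>\<^sup>+u. g u * (\<integral>\<^sup>+y'. ennreal (normal_density m s y') * ennreal ((F u - (if y' \<le> u then 1 else 0))\<^sup>2) \<partial>lborel) \<partial>lborel)"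
    by (intro nn_integral_cong, subst nn_integral_cmult[symmetric]) (auto simp: ac_simps)
  also have "\<dots> = (\<integral>\<^sup>+u. g u * (\<integral>\<^sup>+y'. ennreal ((F u - indicator {y'..} u)\<^sup>2) \<partial>gauss m s) \<partial>lborel)"
    by (intro nn_integral_cong, subst gauss_density) (auto simp: indicator_def of_bool_def)
  also have "\<dots> = (\<integral>\<^sup>+u. g u * (emeasure (gauss m s) {..u} * emeasure (gauss m s) {u<..}) \<partial>lborel)"
    by (simp add: crps_inner[OF s] F_def)
  finally show ?thesis .
qed

interpretation g01: prob_space "gauss 0 1"
  by (rule prob_gauss) simp

interpretation gl: pair_sigma_finite "gauss 0 1" lborel
  by (simp add: pair_sigma_finite_def g01.sigma_finite_measure_axioms lborel.sigma_finite_measure_axioms)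

lemma emeasure_gauss_le_meas[measurable]:
  assumes s: "s \<noteq> 0"
  shows "(\<lambda>u. emeasure (gauss m s) {..u}) \<in> borel_measurable borel"
    "(\<lambda>u. emeasure (gauss m s) {u<..}) \<in> borel_measurable borel"
proof -
  interpret P: prob_space "gauss m s" using prob_gauss[OF s] .
  have [measurable]: "cdf (gauss m s) \<in> borel_measurable borel" using s by measurable
  have e1: "(\<lambda>u. emeasure (gauss m s) {..u}) = (\<lambda>u. ennreal (cdf (gauss m s) u))"
    by (auto simp: P.emeasure_eq_measure cdf_def)
  have e2: "(\<lambda>u. emeasure (gauss m s) {u<..}) = (\<lambda>u. ennreal (1 - cdf (gauss m s) u))"
  proof
    fix u
    have "{u<..} = space (gauss m s) - {..u}" by auto
    then show "emeasure (gauss m s) {u<..} = ennreal (1 - cdf (gauss m s) u)"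
      using P.prob_compl[of "{..u}"] by (simp add: P.emeasure_eq_measure cdf_def)
  qed
  show "(\<lambda>u. emeasure (gauss m s) {..u}) \<in> borel_measurable borel" unfolding e1 by measurable
  show "(\<lambda>u. emeasure (gauss m s) {u<..}) \<in> borel_measurable borel" unfolding e2 by measurable
qed

lemma part1_R:
  "(\<integral>\<^sup>+n'. \<integral>\<^sup>+n. ennreal (max 0 (n - max n' c)) \<partial>gauss 0 1 \<partial>gauss 0 1)
   = (\<integral>\<^sup>+s. indicator {c..} s * (emeasure (gauss 0 1) {..s} * emeasure (gauss 0 1) {s<..}) \<partial>lborel)"
proof -
  let ?H = "\<lambda>n' n s::real. (if c \<le> s \<and> n' \<le> s \<and> s < n then 1 else 0 :: ennreal)"
  have pt: "ennreal (max 0 (n - max n' c)) = (\<integral>\<^sup>+s. ?H n' n s \<partial>lborel)" for n n'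
  proof -
    have "(\<integral>\<^sup>+s. ?H n' n s \<partial>lborel) = (\<integral>\<^sup>+s. indicator {max n' c..<n} s \<partial>lborel)"
      by (intro nn_integral_cong) (auto simp: indicator_def)
    also have "\<dots> = emeasure lborel {max n' c..<n}" by simp
    also have "\<dots> = ennreal (max 0 (n - max n' c))"
      by (cases "max n' c \<le> n") (auto intro!: ennreal_neg)
    finally show ?thesis by simp
  qed
  have "(\<integral>\<^sup>+n'. \<integral>\<^sup>+n. ennreal (max 0 (n - max n' c)) \<partial>gauss 0 1 \<partial>gauss 0 1)
      = (\<integral>\<^sup>+n'. \<integral>\<^sup>+n. \<integral>\<^sup>+s. ?H n' n s \<partial>lborel \<partial>gauss 0 1 \<partial>gauss 0 1)"
    by (intro nn_integral_cong) (rule pt)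
  also have "\<dots> = (\<integral>\<^sup>+n'. \<integral>\<^sup>+s. \<integral>\<^sup>+n. ?H n' n s \<partial>gauss 0 1 \<partial>lborel \<partial>gauss 0 1)"
    by (intro nn_integral_cong gl.Fubini'[symmetric]) measurable
  also have "\<dots> = (\<integral>\<^sup>+s. \<integral>\<^sup>+n'. \<integral>\<^sup>+n. ?H n' n s \<partial>gauss 0 1 \<partial>gauss 0 1 \<partial>lborel)"
    by (intro gl.Fubini'[symmetric]) measurable
  also have "\<dots> = (\<integral>\<^sup>+s. \<integral>\<^sup>+n'. \<integral>\<^sup>+n. indicator {c..} s * indicator {..s} n' * indicator {s<..} n \<partial>gauss 0 1 \<partial>gauss 0 1 \<partial>lborel)"
    by (intro nn_integral_cong) (auto simp: indicator_def)
  also have "\<dots> = (\<integral>\<^sup>+s. indicator {c..} s * (emeasure (gauss 0 1) {..s} * emeasure (gauss 0 1) {s<..}) \<partial>lborel)"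
    by (intro nn_integral_cong) (simp add: nn_integral_cmult nn_integral_multc mult.assoc[symmetric])
  finally show ?thesis .
qed

lemma gauss_le_std:
  assumes s: "s > 0"
  shows "emeasure (gauss m s) {..m + s*x} = emeasure (gauss 0 1) {..x}"
    "emeasure (gauss m s) {m + s*x<..} = emeasure (gauss 0 1) {x<..}"
proof -
  have "{y. m + s*y \<in> {..m + s*x}} = {..x}" using s by auto
  then show "emeasure (gauss m s) {..m + s*x} = emeasure (gauss 0 1) {..x}"
    using gauss_affine_emeasure[of s "{..m + s*x}" m] s by simp
  have "{y. m + s*y \<in> {m + s*x<..}} = {x<..}" using s by auto
  then show "emeasure (gauss m s) {m + s*x<..} = emeasure (gauss 0 1) {x<..}"
    using gauss_affine_emeasure[of s "{m + s*x<..}" m] s by simp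
qed

lemma part1_v:
  assumes s: "s > 0"
  shows "expected_CRPS (density lborel (\<lambda>u. indicator {t..} u)) (gauss m s)
    = ennreal s * (\<integral>\<^sup>+x. indicator {(t - m)/s..} x * (emeasure (gauss 0 1) {..x} * emeasure (gauss 0 1) {x<..}) \<partial>lborel)"
proof -
  have s0: "s \<noteq> 0" using s by simp
  note [measurable] = emeasure_gauss_le_meas[OF s0]
  have "expected_CRPS (density lborel (\<lambda>u. indicator {t..} u)) (gauss m s)
     = (\<integral>\<^sup>+u. indicator {t..} u * (emeasure (gauss m s) {..u} * emeasure (gauss m s) {u<..}) \<partial>lborel)"
    by (rule expected_CRPS_gauss[OF s0]) simp
  also have "\<dots> = ennreal \<bar>s\<bar> * (\<integral>\<^sup>+x. indicator {t..} (m + s*x) * (emeasure (gauss m s) {..m + s*x} * emeasure (gauss m s) {m + s*x<..}) \<partial>lborel)"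
    by (rule nn_integral_real_affine[OF _ s0]) measurable
  also have "\<dots> = ennreal s * (\<integral>\<^sup>+x. indicator {(t - m)/s..} x * (emeasure (gauss 0 1) {..x} * emeasure (gauss 0 1) {x<..}) \<partial>lborel)"
  proof -
    have "indicator {t..} (m + s*x) = (indicator {(t - m)/s..} x :: ennreal)" for x
      using s by (auto simp: indicator_def field_simps)
    then show ?thesis using s by (simp add: gauss_le_std[OF s])
  qed
  finally show ?thesis .
qed

lemma part1:
  assumes s: "\<sigma> > 0"
  shows "(\<integral>\<^sup>+ v. expected_CRPS (density lborel (\<lambda>u. indicator {t..} u))
                 (gauss (\<mu> + \<alpha> * v) \<sigma>) \<partial>gauss 0 1)
       = ennreal \<sigma> *
         (\<integral>\<^sup>+ v. \<integral>\<^sup>+ n'. \<integral>\<^sup>+ n. ennreal (max 0 (n - max n' ((t - \<mu> - \<alpha> * v) / \<sigma>)))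
              \<partial>gauss 0 1 \<partial>gauss 0 1 \<partial>gauss 0 1)"
proof -
  have "(\<integral>\<^sup>+ v. expected_CRPS (density lborel (\<lambda>u. indicator {t..} u))
                 (gauss (\<mu> + \<alpha> * v) \<sigma>) \<partial>gauss 0 1)
     = (\<integral>\<^sup>+ v. ennreal \<sigma> * (\<integral>\<^sup>+ n'. \<integral>\<^sup>+ n. ennreal (max 0 (n - max n' ((t - \<mu> - \<alpha> * v) / \<sigma>)))
              \<partial>gauss 0 1 \<partial>gauss 0 1) \<partial>gauss 0 1)"
    by (intro nn_integral_cong) (simp only: part1_v[OF s] part1_R diff_diff_eq)
  also have "\<dots> = ennreal \<sigma> *
         (\<integral>\<^sup>+ v. \<integral>\<^sup>+ n'. \<integral>\<^sup>+ n. ennreal (max 0 (n - max n' ((t - \<mu> - \<alpha> * v) / \<sigma>)))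
              \<partial>gauss 0 1 \<partial>gauss 0 1 \<partial>gauss 0 1)"
    by (rule nn_integral_cmult) measurable
  finally show ?thesis .
qed

lemma expo_id:
  fixes a b x y w :: real
  assumes a: "a > 0" and b: "b > 0"
  shows "- w\<^sup>2/(2*a) - (x-w)\<^sup>2/(2*b) - (y+w)\<^sup>2/(2*b)
    = - ((b+a)*x\<^sup>2 - 2*(-a)*x*y + (b+a)*y\<^sup>2) / (2*((b+a)*(b+a) - (-a)\<^sup>2))
      - (w - a*(x-y)/(b+2*a))\<^sup>2 / (2*(a*b/(b+2*a)))"
proof -
  define c where "c = b + 2*a"
  have p: "c > 0" using a b unfolding c_def by simp
  define K where "K = 2*a*b*c"
  have K: "K \<noteq> 0" using a b p unfolding K_def by simp
  have D: "(b+a)*(b+a) - (-a)\<^sup>2 = b*c" unfolding c_def by (simp add: power2_eq_square algebra_simps)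
  have L: "(- w\<^sup>2/(2*a) - (x-w)\<^sup>2/(2*b) - (y+w)\<^sup>2/(2*b)) * K
     = -(w\<^sup>2 * b * c + a*c*((x-w)\<^sup>2 + (y+w)\<^sup>2))"
    unfolding K_def using a b by (simp add: field_simps)
  have w0: "w - a*(x-y)/c = (c*w - a*(x-y))/c" using p by (simp add: field_simps)
  have R: "(- ((b+a)*x\<^sup>2 - 2*(-a)*x*y + (b+a)*y\<^sup>2) / (2*(b*c))
      - ((c*w - a*(x-y))/c)\<^sup>2 / (2*(a*b/c))) * K
     = -(a*((b+a)*x\<^sup>2 + 2*a*x*y + (b+a)*y\<^sup>2) + (c*w - a*(x-y))\<^sup>2)"
    unfolding K_def using a b p by (simp add: field_simps power2_eq_square)
  have E: "w\<^sup>2 * b * c + a*c*((x-w)\<^sup>2 + (y+w)\<^sup>2)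
     = a*((b+a)*x\<^sup>2 + 2*a*x*y + (b+a)*y\<^sup>2) + (c*w - a*(x-y))\<^sup>2"
    unfolding c_def by (simp add: power2_eq_square algebra_simps)
  show ?thesis using L R E K unfolding D w0 c_def[symmetric] by (metis mult_right_cancel)
qed

lemma nd_prod:
  assumes s: "\<sigma> > 0" and a: "a > 0"
  shows "normal_density 0 (sqrt a) w * normal_density (m1 + w) \<sigma> p1 * normal_density (m2 - w) \<sigma> p2
   = bivariate_normal_density m1 m2 (\<sigma>\<^sup>2 + a) (-a) (\<sigma>\<^sup>2 + a) (p1, p2) *
     normal_density (a*((p1 - m1) - (p2 - m2))/(\<sigma>\<^sup>2 + 2*a)) (sqrt (a*\<sigma>\<^sup>2/(\<sigma>\<^sup>2 + 2*a))) w"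
proof -
  define b where "b = \<sigma>\<^sup>2"
  define x where "x = p1 - m1"
  define y where "y = p2 - m2"
  have b: "b > 0" using s unfolding b_def by simp
  have c: "b + 2*a > 0" using a b by simp
  have D: "(b+a)*(b+a) - (-a)\<^sup>2 = b*(b+2*a)" by (simp add: power2_eq_square algebra_simps)
  have s0: "(sqrt (a*b/(b+2*a)))\<^sup>2 = a*b/(b+2*a)" using a b c by simp
  have sa: "(sqrt a)\<^sup>2 = a" using a by simp
  have LHS: "normal_density 0 (sqrt a) w * normal_density (m1 + w) \<sigma> p1 * normal_density (m2 - w) \<sigma> p2
     = (1 / sqrt (2*pi*a) * (1 / sqrt (2*pi*b)) * (1 / sqrt (2*pi*b))) *
       exp (- w\<^sup>2/(2*a) - (x-w)\<^sup>2/(2*b) - (y+w)\<^sup>2/(2*b))"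
  proof -
    have e1: "p1 - (m1 + w) = x - w" unfolding x_def by simp
    have e2: "p2 - (m2 - w) = y + w" unfolding y_def by simp
    have "(x - w)\<^sup>2 = (w - x)\<^sup>2" "(- w)\<^sup>2 = w\<^sup>2" by (simp_all add: power2_commute)
    show ?thesis unfolding normal_density_def sa b_def[symmetric] e1 e2
      by (simp add: exp_diff exp_minus field_simps mult_exp_exp[symmetric])
  qed
  have RHS: "bivariate_normal_density m1 m2 (\<sigma>\<^sup>2 + a) (-a) (\<sigma>\<^sup>2 + a) (p1, p2) *
     normal_density (a*((p1 - m1) - (p2 - m2))/(\<sigma>\<^sup>2 + 2*a)) (sqrt (a*\<sigma>\<^sup>2/(\<sigma>\<^sup>2 + 2*a))) w
     = (1 / (2*pi * sqrt (b*(b+2*a))) * (1 / sqrt (2*pi*(a*b/(b+2*a))))) *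
       exp (- ((b+a)*x\<^sup>2 - 2*(-a)*x*y + (b+a)*y\<^sup>2) / (2*((b+a)*(b+a) - (-a)\<^sup>2))
      - (w - a*(x-y)/(b+2*a))\<^sup>2 / (2*(a*b/(b+2*a))))"
  proof -
    have aux: "exp X / P * (1 / Q * exp (- Z / B)) = (1/P * (1/Q)) * exp (X - Z/B)" for X P Q Z B :: real
    proof -
      have "exp (- Z / B) = inverse (exp (Z/B))" by (simp add: exp_minus[symmetric])
      then show ?thesis by (simp add: exp_diff divide_inverse)
    qed
    have f1: "bivariate_normal_density m1 m2 (\<sigma>\<^sup>2 + a) (-a) (\<sigma>\<^sup>2 + a) (p1, p2)
      = exp (- ((b+a)*x\<^sup>2 - 2*(-a)*x*y + (b+a)*y\<^sup>2) / (2*((b+a)*(b+a) - (-a)\<^sup>2))) / (2*pi * sqrt (b*(b+2*a)))"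
      unfolding bivariate_normal_density_def Let_def b_def[symmetric] x_def[symmetric] y_def[symmetric] fst_conv snd_conv
        D[symmetric] by (simp add: power2_eq_square)
    have f2: "normal_density (a*((p1 - m1) - (p2 - m2))/(\<sigma>\<^sup>2 + 2*a)) (sqrt (a*\<sigma>\<^sup>2/(\<sigma>\<^sup>2 + 2*a))) w
      = 1 / sqrt (2*pi*(a*b/(b+2*a))) * exp (- (w - a*(x-y)/(b+2*a))\<^sup>2 / (2*(a*b/(b+2*a))))"
      unfolding normal_density_def b_def[symmetric] x_def[symmetric] y_def[symmetric] s0 by simp
    show ?thesis unfolding f1 f2 by (rule aux)
  qed
  have C: "1 / sqrt (2*pi*a) * (1 / sqrt (2*pi*b)) * (1 / sqrt (2*pi*b))
      = 1 / (2*pi * sqrt (b*(b+2*a))) * (1 / sqrt (2*pi*(a*b/(b+2*a))))"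
  proof -
    have "sqrt (2*pi*b) * sqrt (2*pi*b) = 2*pi*b" using b by simp
    moreover have "sqrt (b*(b+2*a)) * sqrt (2*pi*(a*b/(b+2*a))) = b * sqrt (2*pi*a)"
    proof -
      have "sqrt (b*(b+2*a)) * sqrt (2*pi*(a*b/(b+2*a))) = sqrt (b*(b+2*a) * (2*pi*(a*b/(b+2*a))))"
        by (rule real_sqrt_mult[symmetric])
      also have "b*(b+2*a) * (2*pi*(a*b/(b+2*a))) = b\<^sup>2 * (2*pi*a)" using c by (simp add: field_simps power2_eq_square)
      also have "sqrt (b\<^sup>2 * (2*pi*a)) = b * sqrt (2*pi*a)" using b by (simp add: real_sqrt_mult)
      finally show ?thesis .
    qed
    ultimately show ?thesis by (simp add: field_simps)
  qed
  show ?thesis unfolding LHS RHS C expo_id[OF a b] ..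
qed

lemma bnd_nonneg: "s11 * s22 - s12\<^sup>2 \<ge> 0 \<Longrightarrow> bivariate_normal_density m1 m2 s11 s12 s22 p \<ge> 0"
  unfolding bivariate_normal_density_def Let_def by (intro divide_nonneg_nonneg) auto

lemma nn_integral_nd: "s > 0 \<Longrightarrow> (\<integral>\<^sup>+w. ennreal (normal_density m s w) \<partial>lborel) = 1"
  by (subst nn_integral_eq_integral) auto

lemma bnd_integral:
  assumes s: "\<sigma> > 0" and a: "a > 0"
  shows "ennreal (bivariate_normal_density m1 m2 (\<sigma>\<^sup>2 + a) (-a) (\<sigma>\<^sup>2 + a) (p1, p2))
    = (\<integral>\<^sup>+w. ennreal (normal_density 0 (sqrt a) w * normal_density (m1 + w) \<sigma> p1 * normal_density (m2 - w) \<sigma> p2) \<partial>lborel)"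
proof -
  have D: "(\<sigma>\<^sup>2 + a) * (\<sigma>\<^sup>2 + a) - (-a)\<^sup>2 \<ge> 0" using s a by (simp add: power2_eq_square algebra_simps)
  have s0: "sqrt (a*\<sigma>\<^sup>2/(\<sigma>\<^sup>2 + 2*a)) > 0" using s a by (simp add: add_pos_pos)
  show ?thesis unfolding nd_prod[OF s a]
    by (simp add: ennreal_mult'[OF bnd_nonneg[OF D]] nn_integral_cmult nn_integral_nd[OF s0])
qed

lemma nd_meas[measurable (raw)]:
  assumes [measurable]: "f \<in> borel_measurable M" "g \<in> borel_measurable M" "h \<in> borel_measurable M"
  shows "(\<lambda>x. normal_density (f x) (g x) (h x)) \<in> borel_measurable M"
  unfolding normal_density_def by measurable

lemma bnd_meas[measurable]: "(\<lambda>p::real\<times>real. bivariate_normal_density m1 m2 s11 s12 s22 p) \<in> borel_measurable (borel \<Otimes>\<^sub>M borel)"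
  unfolding bivariate_normal_density_def Let_def by measurable

lemma quadrant:
  assumes s: "\<sigma> > 0" and a: "a > 0"
  shows "emeasure (density (lborel \<Otimes>\<^sub>M lborel) (bivariate_normal_density m1 m2 (\<sigma>\<^sup>2 + a) (-a) (\<sigma>\<^sup>2 + a))) ({..0} \<times> {..0})
   = (\<integral>\<^sup>+w. ennreal (normal_density 0 (sqrt a) w) * (emeasure (gauss (m1 + w) \<sigma>) {..0} * emeasure (gauss (m2 - w) \<sigma>) {..0}) \<partial>lborel)"
proof -
  let ?G = "\<lambda>w p1 p2. ennreal (normal_density 0 (sqrt a) w * normal_density (m1 + w) \<sigma> p1 * normal_density (m2 - w) \<sigma> p2)"
  let ?b = "bivariate_normal_density m1 m2 (\<sigma>\<^sup>2 + a) (-a) (\<sigma>\<^sup>2 + a)"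
  have "emeasure (density (lborel \<Otimes>\<^sub>M lborel) ?b) ({..0} \<times> {..0})
      = (\<integral>\<^sup>+p. ennreal (?b p) * indicator ({..0} \<times> {..0}) p \<partial>(lborel \<Otimes>\<^sub>M lborel))"
    by (subst emeasure_density) auto
  also have "\<dots> = (\<integral>\<^sup>+p1. \<integral>\<^sup>+p2. ennreal (?b (p1, p2)) * indicator ({..0} \<times> {..0}) (p1, p2) \<partial>lborel \<partial>lborel)"
  proof -
    have m: "(\<lambda>p. ennreal (?b p) * indicator ({..0} \<times> {..0}) p) \<in> borel_measurable (lborel \<Otimes>\<^sub>M lborel)"
      by measurable
    show ?thesis using lborel.nn_integral_fst[OF m] by simp
  qed
  also have "\<dots> = (\<integral>\<^sup>+p1. \<integral>\<^sup>+p2. \<integral>\<^sup>+w. ?G w p1 p2 * (indicator {..0} p1 * indicator {..0} p2) \<partial>lborel \<partial>lborel \<partial>lborel)"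
    apply (intro nn_integral_cong)
    apply (simp add: bnd_integral[OF s a] indicator_times)
    apply (rule nn_integral_multc[symmetric])
    apply measurable
    done
  also have "\<dots> = (\<integral>\<^sup>+p1. \<integral>\<^sup>+w. \<integral>\<^sup>+p2. ?G w p1 p2 * (indicator {..0} p1 * indicator {..0} p2) \<partial>lborel \<partial>lborel \<partial>lborel)"
    by (intro nn_integral_cong lborel_pair.Fubini') measurable
  also have "\<dots> = (\<integral>\<^sup>+w. \<integral>\<^sup>+p1. \<integral>\<^sup>+p2. ?G w p1 p2 * (indicator {..0} p1 * indicator {..0} p2) \<partial>lborel \<partial>lborel \<partial>lborel)"
    by (rule lborel_pair.Fubini') measurable
  also have "\<dots> = (\<integral>\<^sup>+w. ennreal (normal_density 0 (sqrt a) w) *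
       ((\<integral>\<^sup>+p1. ennreal (normal_density (m1 + w) \<sigma> p1) * indicator {..0} p1 \<partial>lborel) *
        (\<integral>\<^sup>+p2. ennreal (normal_density (m2 - w) \<sigma> p2) * indicator {..0} p2 \<partial>lborel)) \<partial>lborel)"
  proof (intro nn_integral_cong)
    fix w
    have "(\<integral>\<^sup>+p1. \<integral>\<^sup>+p2. ?G w p1 p2 * (indicator {..0} p1 * indicator {..0} p2) \<partial>lborel \<partial>lborel)
      = (\<integral>\<^sup>+p1. \<integral>\<^sup>+p2. (ennreal (normal_density 0 (sqrt a) w) * (ennreal (normal_density (m1 + w) \<sigma> p1) * indicator {..0} p1)) *
           (ennreal (normal_density (m2 - w) \<sigma> p2) * indicator {..0} p2) \<partial>lborel \<partial>lborel)"
      by (intro nn_integral_cong) (simp add: ennreal_mult' mult_ac)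
    also have "\<dots> = ennreal (normal_density 0 (sqrt a) w) *
       ((\<integral>\<^sup>+p1. ennreal (normal_density (m1 + w) \<sigma> p1) * indicator {..0} p1 \<partial>lborel) *
        (\<integral>\<^sup>+p2. ennreal (normal_density (m2 - w) \<sigma> p2) * indicator {..0} p2 \<partial>lborel))"
    proof -
      have mA: "(\<lambda>p1. ennreal (normal_density (m1 + w) \<sigma> p1) * indicator {..0} p1) \<in> borel_measurable lborel" by measurable
      have mA': "(\<lambda>p1. ennreal (normal_density 0 (sqrt a) w) * (ennreal (normal_density (m1 + w) \<sigma> p1) * indicator {..0} p1)) \<in> borel_measurable lborel" by measurable
      have mB: "(\<lambda>p2. ennreal (normal_density (m2 - w) \<sigma> p2) * indicator {..0} p2) \<in> borel_measurable lborel" by measurable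
      show ?thesis
        unfolding nn_integral_cmult[OF mB] nn_integral_multc[OF mA'] nn_integral_cmult[OF mA] by (simp add: mult.assoc)
    qed
    finally show "(\<integral>\<^sup>+p1. \<integral>\<^sup>+p2. ?G w p1 p2 * (indicator {..0} p1 * indicator {..0} p2) \<partial>lborel \<partial>lborel) = \<dots>" .
  qed
  also have "\<dots> = (\<integral>\<^sup>+w. ennreal (normal_density 0 (sqrt a) w) * (emeasure (gauss (m1 + w) \<sigma>) {..0} * emeasure (gauss (m2 - w) \<sigma>) {..0}) \<partial>lborel)"
    unfolding gauss_def by (simp add: emeasure_density)
  finally show ?thesis .
qed

lemma gauss_conv:
  assumes s1: "s1 > 0" and s2: "s2 > 0" and f[measurable]: "f \<in> borel_measurable borel"
  shows "(\<integral>\<^sup>+x. (\<integral>\<^sup>+u. f (u - x) \<partial>gauss t s2) \<partial>gauss 0 s1) = (\<integral>\<^sup>+z. f z \<partial>gauss t (sqrt (s1\<^sup>2 + s2\<^sup>2)))"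
proof -
  have "(\<integral>\<^sup>+x. (\<integral>\<^sup>+u. f (u - x) \<partial>gauss t s2) \<partial>gauss 0 s1)
     = (\<integral>\<^sup>+x. (\<integral>\<^sup>+u. ennreal (normal_density t s2 u) * f (u - x) \<partial>lborel) \<partial>gauss 0 s1)"
    by (intro nn_integral_cong gauss_density) measurable
  also have "\<dots> = (\<integral>\<^sup>+x. ennreal (normal_density 0 s1 x) * (\<integral>\<^sup>+u. ennreal (normal_density t s2 u) * f (u - x) \<partial>lborel) \<partial>lborel)"
    by (rule gauss_density) measurable
  also have "\<dots> = (\<integral>\<^sup>+x. ennreal (normal_density 0 s1 x) * (\<integral>\<^sup>+z. ennreal (normal_density t s2 (x + z)) * f z \<partial>lborel) \<partial>lborel)"
  proof (intro nn_integral_cong)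
    fix x
    have "(\<integral>\<^sup>+u. ennreal (normal_density t s2 u) * f (u - x) \<partial>lborel)
       = ennreal \<bar>1\<bar> * (\<integral>\<^sup>+z. ennreal (normal_density t s2 (x + 1 * z)) * f (x + 1 * z - x) \<partial>lborel)"
      by (rule nn_integral_real_affine) auto
    then show "ennreal (normal_density 0 s1 x) * (\<integral>\<^sup>+u. ennreal (normal_density t s2 u) * f (u - x) \<partial>lborel)
      = ennreal (normal_density 0 s1 x) * (\<integral>\<^sup>+z. ennreal (normal_density t s2 (x + z)) * f z \<partial>lborel)" by simp
  qed
  also have "\<dots> = (\<integral>\<^sup>+x. \<integral>\<^sup>+z. ennreal (normal_density 0 s1 x) * (ennreal (normal_density t s2 (x + z)) * f z) \<partial>lborel \<partial>lborel)"
    by (intro nn_integral_cong nn_integral_cmult[symmetric]) measurable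
  also have "\<dots> = (\<integral>\<^sup>+z. \<integral>\<^sup>+x. ennreal (normal_density 0 s1 x) * (ennreal (normal_density t s2 (x + z)) * f z) \<partial>lborel \<partial>lborel)"
    by (rule lborel_pair.Fubini'[symmetric]) measurable
  also have "\<dots> = (\<integral>\<^sup>+z. (\<integral>\<^sup>+x. ennreal (normal_density 0 s1 x * normal_density t s2 (x + z)) \<partial>lborel) * f z \<partial>lborel)"
    by (intro nn_integral_cong, subst nn_integral_multc[symmetric]) (auto simp: ennreal_mult' mult.assoc)
  also have "\<dots> = (\<integral>\<^sup>+z. ennreal (normal_density t (sqrt (s1\<^sup>2 + s2\<^sup>2)) z) * f z \<partial>lborel)"
  proof (intro nn_integral_cong)
    fix z
    have "(\<integral>\<^sup>+x. ennreal (normal_density 0 s1 x * normal_density t s2 (x + z)) \<partial>lborel)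
      = ennreal \<bar>-1\<bar> * (\<integral>\<^sup>+y. ennreal (normal_density 0 s1 (0 + -1 * y) * normal_density t s2 ((0 + -1 * y) + z)) \<partial>lborel)"
      by (rule nn_integral_real_affine) auto
    also have "\<dots> = (\<integral>\<^sup>+y. ennreal (normal_density 0 s1 (0 + -1 * y) * normal_density t s2 ((0 + -1 * y) + z)) \<partial>lborel)"
      by simp
    also have "\<dots> = (\<integral>\<^sup>+y. ennreal (normal_density 0 s2 ((z - t) - y) * normal_density 0 s1 y) \<partial>lborel)"
    proof (intro nn_integral_cong arg_cong[where f=ennreal])
      fix y :: real
      have e: "t - (z - y) = y - (z - t)" by simp
      show "normal_density 0 s1 (0 + -1 * y) * normal_density t s2 ((0 + -1 * y) + z) = normal_density 0 s2 ((z - t) - y) * normal_density 0 s1 y"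
        by (simp add: normal_density_def power2_commute e mult_ac)
    qed
    also have "\<dots> = normal_density 0 (sqrt (s2\<^sup>2 + s1\<^sup>2)) (z - t)"
      using conv_normal_density_zero_mean[OF s2 s1] by (simp add: fun_eq_iff)
    also have "\<dots> = normal_density t (sqrt (s1\<^sup>2 + s2\<^sup>2)) z"
      by (simp add: normal_density_def add.commute)
    finally show "(\<integral>\<^sup>+x. ennreal (normal_density 0 s1 x * normal_density t s2 (x + z)) \<partial>lborel) * f z
      = ennreal (normal_density t (sqrt (s1\<^sup>2 + s2\<^sup>2)) z) * f z" by simp
  qed
  also have "\<dots> = (\<integral>\<^sup>+z. f z \<partial>gauss t (sqrt (s1\<^sup>2 + s2\<^sup>2)))"
    by (rule gauss_density[symmetric]) measurable
  finally show ?thesis .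
qed

lemma gauss_singleton: "emeasure (gauss m s) {c} = 0"
proof -
  have "emeasure (gauss m s) {c} = (\<integral>\<^sup>+x. ennreal (normal_density m s x) * indicator {c} x \<partial>lborel)"
    unfolding gauss_def by (subst emeasure_density) auto
  also have "\<dots> = (\<integral>\<^sup>+x. ennreal (normal_density m s c) * indicator {c} x \<partial>lborel)"
    by (intro nn_integral_cong) (auto simp: indicator_def)
  also have "\<dots> = 0" by simp
  finally show ?thesis .
qed

lemma gauss_shift:
  assumes s: "s \<noteq> 0"
  shows "emeasure (gauss m s) {..u} = emeasure (gauss 0 s) {..u - m}"
    "emeasure (gauss m s) {u<..} = emeasure (gauss 0 s) {u - m<..}"
proof -
  have "{x. m + s*x \<in> {..u}} = {x. 0 + s*x \<in> {..u - m}}" "{x. m + s*x \<in> {u<..}} = {x. 0 + s*x \<in> {u - m<..}}" by auto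
  then show "emeasure (gauss m s) {..u} = emeasure (gauss 0 s) {..u - m}"
    "emeasure (gauss m s) {u<..} = emeasure (gauss 0 s) {u - m<..}"
    by (simp_all only: gauss_affine_emeasure[OF s] atMost_borel greaterThan_borel)
qed

lemma gauss_sym:
  assumes s: "s \<noteq> 0"
  shows "emeasure (gauss 0 s) {..y} = emeasure (gauss 0 s) {-y<..}"
proof -
  have s': "-s \<noteq> 0" using s by simp
  have "emeasure (gauss 0 s) {..y} = emeasure (gauss 0 (-s)) {..y}" by (simp add: gauss_neg)
  also have "\<dots> = emeasure (gauss 0 1) {x. 0 + (-s)*x \<in> {..y}}" by (rule gauss_affine_emeasure[OF s']) simp
  also have "{x. 0 + (-s)*x \<in> {..y}} = {x. 0 + s*x \<in> {-y..}}" by auto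
  also have "emeasure (gauss 0 1) \<dots> = emeasure (gauss 0 s) {-y..}" by (rule gauss_affine_emeasure[OF s, symmetric]) simp
  also have "\<dots> = emeasure (gauss 0 s) ({-y<..} \<union> {-y})"
    by (intro arg_cong[where f="emeasure _"]) auto
  also have "\<dots> = emeasure (gauss 0 s) {-y<..}"
    by (subst plus_emeasure[symmetric]) (auto simp: gauss_singleton)
  finally show ?thesis .
qed

lemma E_meas:
  assumes s: "s \<noteq> 0"
  shows "(\<lambda>u. emeasure (gauss 0 s) {..u - c}) \<in> borel_measurable borel"
    "(\<lambda>u. emeasure (gauss 0 s) {u - c<..}) \<in> borel_measurable borel"
  using measurable_compose[OF _ emeasure_gauss_le_meas(1)[OF s], of "\<lambda>u. u - c" borel]
        measurable_compose[OF _ emeasure_gauss_le_meas(2)[OF s], of "\<lambda>u. u - c" borel] by auto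

lemma nd_std: "sg > 0 \<Longrightarrow> 1 / sg * std_normal_density ((u - t) / sg) = normal_density t sg u"
  by (simp add: normal_density_def real_sqrt_mult power_divide field_simps)

lemma part2_v:
  assumes s: "\<sigma> > 0" and sg: "sg > 0"
  shows "expected_CRPS (density lborel (\<lambda>u. ennreal (1 / sg * std_normal_density ((u - t) / sg)))) (gauss m \<sigma>)
    = (\<integral>\<^sup>+u. emeasure (gauss 0 \<sigma>) {..u - m} * emeasure (gauss 0 \<sigma>) {u - m<..} \<partial>gauss t sg)"
proof -
  have s0: "\<sigma> \<noteq> 0" using s by simp
  note [measurable] = E_meas[OF s0, of m]
  have "expected_CRPS (density lborel (\<lambda>u. ennreal (1 / sg * std_normal_density ((u - t) / sg)))) (gauss m \<sigma>)
     = expected_CRPS (density lborel (\<lambda>u. ennreal (normal_density t sg u))) (gauss m \<sigma>)"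
    by (simp only: nd_std[OF sg])
  also have "\<dots> = (\<integral>\<^sup>+u. ennreal (normal_density t sg u) * (emeasure (gauss m \<sigma>) {..u} * emeasure (gauss m \<sigma>) {u<..}) \<partial>lborel)"
    by (rule expected_CRPS_gauss[OF s0]) measurable
  also have "\<dots> = (\<integral>\<^sup>+u. ennreal (normal_density t sg u) * (emeasure (gauss 0 \<sigma>) {..u - m} * emeasure (gauss 0 \<sigma>) {u - m<..}) \<partial>lborel)"
    by (simp only: gauss_shift[OF s0, of m])
  also have "\<dots> = (\<integral>\<^sup>+u. emeasure (gauss 0 \<sigma>) {..u - m} * emeasure (gauss 0 \<sigma>) {u - m<..} \<partial>gauss t sg)"
    by (rule gauss_density[symmetric]) measurable
  finally show ?thesis .
qed

lemma part2:
  assumes s: "\<sigma> > 0" and sg: "sg > 0"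
  shows "(\<integral>\<^sup>+ v. expected_CRPS
                   (density lborel (\<lambda>u. ennreal (1 / sg * std_normal_density ((u - t) / sg))))
                   (gauss (\<mu> + \<alpha> * v) \<sigma>) \<partial>gauss 0 1)
       = ennreal (bivariate_Phi (0, 0) (\<mu> - t) (t - \<mu>)
                   (\<sigma>\<^sup>2 + \<alpha>\<^sup>2 + sg\<^sup>2) (- \<alpha>\<^sup>2 - sg\<^sup>2) (\<sigma>\<^sup>2 + \<alpha>\<^sup>2 + sg\<^sup>2))"
proof -
  have s0: "\<sigma> \<noteq> 0" using s by simp
  note [measurable] = E_meas[OF s0, of \<mu>]
  define a where "a = \<alpha>\<^sup>2 + sg\<^sup>2"
  have a: "a > 0" unfolding a_def using sg by (simp add: add_nonneg_pos)
  have sa: "sqrt a > 0" using a by simp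
  define f where "f z = emeasure (gauss 0 \<sigma>) {..z - \<mu>} * emeasure (gauss 0 \<sigma>) {z - \<mu><..}" for z
  have f_meas[measurable]: "f \<in> borel_measurable borel" unfolding f_def by measurable
  define T where "T = (\<integral>\<^sup>+z. f z \<partial>gauss t (sqrt a))"
  have "(\<integral>\<^sup>+ v. expected_CRPS
                   (density lborel (\<lambda>u. ennreal (1 / sg * std_normal_density ((u - t) / sg))))
                   (gauss (\<mu> + \<alpha> * v) \<sigma>) \<partial>gauss 0 1)
      = (\<integral>\<^sup>+v. (\<integral>\<^sup>+u. f (u - \<alpha> * v) \<partial>gauss t sg) \<partial>gauss 0 1)"
  proof (intro nn_integral_cong)
    fix v
    have e: "\<And>u. u - (\<mu> + \<alpha> * v) = u - \<alpha> * v - \<mu>" by simp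
    show "expected_CRPS (density lborel (\<lambda>u. ennreal (1 / sg * std_normal_density ((u - t) / sg)))) (gauss (\<mu> + \<alpha> * v) \<sigma>)
      = (\<integral>\<^sup>+u. f (u - \<alpha> * v) \<partial>gauss t sg)"
      unfolding part2_v[OF s sg] f_def e ..
  qed
  also have "\<dots> = T"
  proof (cases "\<alpha> = 0")
    case True
    then have "sqrt a = sg" unfolding a_def using sg by simp
    moreover have "emeasure (gauss 0 1) UNIV = 1" using g01.emeasure_space_1 by simp
    ultimately show ?thesis using True unfolding T_def by simp
  next
    case False
    define H where "H x = (\<integral>\<^sup>+u. f (u - x) \<partial>gauss t sg)" for x
    have "H = (\<lambda>x. \<integral>\<^sup>+u. ennreal (normal_density t sg u) * f (u - x) \<partial>lborel)"
      unfolding H_def by (intro ext gauss_density) measurable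
    then have H_meas[measurable]: "H \<in> borel_measurable borel" by simp
    have "(\<integral>\<^sup>+v. (\<integral>\<^sup>+u. f (u - \<alpha> * v) \<partial>gauss t sg) \<partial>gauss 0 1) = (\<integral>\<^sup>+v. H (0 + \<alpha> * v) \<partial>gauss 0 1)"
      unfolding H_def by simp
    also have "\<dots> = (\<integral>\<^sup>+x. H x \<partial>gauss 0 \<alpha>)"
      by (rule gauss_affine[OF False, symmetric]) measurable
    also have "\<dots> = (\<integral>\<^sup>+x. H x \<partial>gauss 0 \<bar>\<alpha>\<bar>)"
      by (cases "\<alpha> \<ge> 0") (simp_all add: gauss_neg)
    also have "\<dots> = (\<integral>\<^sup>+z. f z \<partial>gauss t (sqrt (\<bar>\<alpha>\<bar>\<^sup>2 + sg\<^sup>2)))"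
      unfolding H_def by (rule gauss_conv) (use False sg in auto)
    also have "\<dots> = T" unfolding T_def a_def by simp
    finally show ?thesis .
  qed
  also have TE: "T = emeasure (density (lborel \<Otimes>\<^sub>M lborel) (bivariate_normal_density (\<mu> - t) (t - \<mu>) (\<sigma>\<^sup>2 + a) (-a) (\<sigma>\<^sup>2 + a))) ({..0} \<times> {..0})"
  proof -
    have "emeasure (density (lborel \<Otimes>\<^sub>M lborel) (bivariate_normal_density (\<mu> - t) (t - \<mu>) (\<sigma>\<^sup>2 + a) (-a) (\<sigma>\<^sup>2 + a))) ({..0} \<times> {..0})
       = (\<integral>\<^sup>+w. ennreal (normal_density 0 (sqrt a) w) * (emeasure (gauss ((\<mu> - t) + w) \<sigma>) {..0} * emeasure (gauss ((t - \<mu>) - w) \<sigma>) {..0}) \<partial>lborel)"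
      by (rule quadrant[OF s a])
    also have "\<dots> = (\<integral>\<^sup>+w. ennreal (normal_density 0 (sqrt a) w) * f (t - w) \<partial>lborel)"
    proof (intro nn_integral_cong arg_cong2[where f="(*)"] refl)
      fix w
      have e1: "0 - (\<mu> - t + w) = t - w - \<mu>" "- (0 - (t - \<mu> - w)) = t - w - \<mu>" by simp_all
      show "emeasure (gauss ((\<mu> - t) + w) \<sigma>) {..0} * emeasure (gauss ((t - \<mu>) - w) \<sigma>) {..0} = f (t - w)"
        unfolding f_def gauss_shift(1)[OF s0, of "\<mu> - t + w"] gauss_shift(1)[OF s0, of "t - \<mu> - w"]
          gauss_sym[OF s0, of "0 - (t - \<mu> - w)"] e1 ..
    qed
    also have "\<dots> = (\<integral>\<^sup>+w. f (t - w) \<partial>gauss 0 (sqrt a))"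
      by (rule gauss_density[symmetric]) measurable
    also have "\<dots> = (\<integral>\<^sup>+x. f (t - (0 + sqrt a * x)) \<partial>gauss 0 1)"
      by (rule gauss_affine) (use sa in auto)
    also have "\<dots> = (\<integral>\<^sup>+x. f (t + (- sqrt a) * x) \<partial>gauss 0 1)" by simp
    also have "\<dots> = (\<integral>\<^sup>+z. f z \<partial>gauss t (- sqrt a))"
      by (rule gauss_affine[symmetric]) (use sa in auto)
    also have "\<dots> = T" unfolding T_def gauss_neg ..
    finally show ?thesis ..
  qed
  also have "\<dots> = ennreal (bivariate_Phi (0, 0) (\<mu> - t) (t - \<mu>)
                   (\<sigma>\<^sup>2 + \<alpha>\<^sup>2 + sg\<^sup>2) (- \<alpha>\<^sup>2 - sg\<^sup>2) (\<sigma>\<^sup>2 + \<alpha>\<^sup>2 + sg\<^sup>2))"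
  proof -
    have p1: "\<sigma>\<^sup>2 + \<alpha>\<^sup>2 + sg\<^sup>2 = \<sigma>\<^sup>2 + a" "- \<alpha>\<^sup>2 - sg\<^sup>2 = -a" unfolding a_def by simp_all
    have fin: "T \<noteq> \<top>"
    proof -
      interpret P: prob_space "gauss 0 \<sigma>" by (rule prob_gauss[OF s0])
      interpret Q: prob_space "gauss t (sqrt a)" by (rule prob_gauss) (use sa in simp)
      have "T \<le> (\<integral>\<^sup>+z. 1 \<partial>gauss t (sqrt a))"
        unfolding T_def f_def
        by (intro nn_integral_mono) (metis P.emeasure_le_1 mult_le_one zero_le)
      also have "\<dots> = 1" using Q.emeasure_space_1 by simp
      finally show ?thesis by (auto simp: top_unique)
    qed
    show ?thesis using fin TE
      unfolding bivariate_Phi_def p1 fst_conv snd_conv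
      by (metis emeasure_eq_ennreal_measure)
  qed
  finally show ?thesis .
qed

theorem theorem3:
  fixes m\<^sub>n :: "'x \<Rightarrow> real" and k\<^sub>n :: "'x \<Rightarrow> 'x \<Rightarrow> real"
    and \<tau>2 :: real and x x' :: 'x and t :: real
    and \<alpha> \<sigma> \<mu> :: real
  assumes noise: "\<tau>2 \<ge> 0"
    and var_pos: "k\<^sub>n x x + \<tau>2 > 0"
    and alpha_def: "\<alpha> = k\<^sub>n x x' / sqrt (k\<^sub>n x x + \<tau>2)"
    and sigma_def: "\<sigma>\<^sup>2 = k\<^sub>n x' x' - (k\<^sub>n x x')\<^sup>2 / (k\<^sub>n x x + \<tau>2)"
    and sigma_pos: "\<sigma> > 0"
    and mu_def: "\<mu> = m\<^sub>n x'"
  shows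
    "((\<integral>\<^sup>+ v. expected_CRPS (density lborel (\<lambda>u. indicator {t..} u))
                 (gauss (\<mu> + \<alpha> * v) \<sigma>) \<partial>gauss 0 1)
       = ennreal \<sigma> *
         (\<integral>\<^sup>+ v. \<integral>\<^sup>+ n'. \<integral>\<^sup>+ n. ennreal (max 0 (n - max n' ((t - \<mu> - \<alpha> * v) / \<sigma>)))
              \<partial>gauss 0 1 \<partial>gauss 0 1 \<partial>gauss 0 1))
     \<and> (\<forall>\<sigma>\<^sub>\<gamma> > 0.
       (\<integral>\<^sup>+ v. expected_CRPS
                   (density lborel (\<lambda>u. ennreal (1 / \<sigma>\<^sub>\<gamma> * std_normal_density ((u - t) / \<sigma>\<^sub>\<gamma>))))
                   (gauss (\<mu> + \<alpha> * v) \<sigma>) \<partial>gauss 0 1)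
       = ennreal (bivariate_Phi (0, 0) (\<mu> - t) (t - \<mu>)
                   (\<sigma>\<^sup>2 + \<alpha>\<^sup>2 + \<sigma>\<^sub>\<gamma>\<^sup>2) (- \<alpha>\<^sup>2 - \<sigma>\<^sub>\<gamma>\<^sup>2) (\<sigma>\<^sup>2 + \<alpha>\<^sup>2 + \<sigma>\<^sub>\<gamma>\<^sup>2)))"
  using part1[OF sigma_pos] part2[OF sigma_pos] by blast

end
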